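(* In the setting below, if $$\sum_{t\in\mathcal K}\|Z^\top f(x_t)\|_2\le \sum_{t\in\mathcal K^c}\|Z^\top f(x_t)\|_2\qquad\text{for all } Z\in\mathbb{R}^{m\times n},$$ then $\bar A$ is a global minimizer of $\min_{A\in\mathbb{R}^{n\times m}}\sum_{t=0}^{T-1}\|(\bar A-A)f(x_t)+\bar d_t\|_2$.
   Context: $f:\mathbb{R}^n\to\mathbb{R}^m$ is given, $\bar A\in\mathbb{R}^{n\times m}$, $\bar d_0,\dots,\bar d_{T-1}\in\mathbb{R}^n$, and $x_0=0_n$, $x_{t+1}=\bar A f(x_t)+\bar d_t$ for $t=0,\dots,T-1$. $\mathcal K:=\{t\in\{0,\dots,T-1\}:\bar d_t\ne 0\}$, $\mathcal K^c:=\{0,\dots,T-1\}\setminus\mathcal K$. *)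

theory Defs
  imports "HOL-Analysis.Analysis"
begin

text \<open>Trajectory: x_0 = 0, x_{t+1} = Abar *v f(x_t) + d_t.
  Vectors in R^n are real^'n, R^m are real^'m; a matrix in R^{n x m} is real^'m^'n.\<close>
fun traj :: "(real^'n \<Rightarrow> real^'m) \<Rightarrow> real^'m^'n \<Rightarrow> (nat \<Rightarrow> real^'n) \<Rightarrow> nat \<Rightarrow> real^'n" where
  "traj f A d 0 = 0"
| "traj f A d (Suc t) = A *v f (traj f A d t) + d t"

end

theory Submission
  imports Defs
begin

theorem corollary1:
  fixes f :: "real^'n \<Rightarrow> real^'m"
    and Abar :: "real^'m^'n"
    and d :: "nat \<Rightarrow> real^'n"
    and T :: nat
  defines "K \<equiv> {t. t < T \<and> d t \<noteq> 0}"
  assumes "\<forall>Z :: real^'n^'m.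
     (\<Sum>t\<in>K. norm (transpose Z *v f (traj f Abar d t)))
       \<le> (\<Sum>t\<in>{0..<T} - K. norm (transpose Z *v f (traj f Abar d t)))"
  shows "\<forall>A :: real^'m^'n.
     (\<Sum>t<T. norm ((Abar - Abar) *v f (traj f Abar d t) + d t))
       \<le> (\<Sum>t<T. norm ((Abar - A) *v f (traj f Abar d t) + d t))"
proof
  fix A :: "real^'m^'n"
  define B where "B = Abar - A"
  define y where "y t = f (traj f Abar d t)" for t
  define C where "C = {0..<T} - K"
  have fin: "finite K" "finite C" unfolding K_def C_def by auto
  have dis: "K \<inter> C = {}" unfolding C_def by auto
  have un: "{..<T} = K \<union> C" unfolding C_def K_def by auto
  have dC: "t \<in> C \<Longrightarrow> d t = 0" for t unfolding C_def K_def by auto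
  have key: "(\<Sum>t\<in>K. norm (B *v y t)) \<le> (\<Sum>t\<in>C. norm (B *v y t))"
    using assms(2)[rule_format, of "transpose B"] unfolding C_def y_def by (simp add: transpose_transpose)
  have L: "(\<Sum>t<T. norm ((Abar - Abar) *v f (traj f Abar d t) + d t)) = (\<Sum>t\<in>K. norm (d t))"
    unfolding un using fin dis dC by (simp add: sum.union_disjoint)
  have R: "(\<Sum>t<T. norm ((Abar - A) *v f (traj f Abar d t) + d t))
     = (\<Sum>t\<in>K. norm (B *v y t + d t)) + (\<Sum>t\<in>C. norm (B *v y t))"
    unfolding un B_def[symmetric] y_def[symmetric] using fin dis dC by (simp add: sum.union_disjoint)
  have "(\<Sum>t\<in>K. norm (d t)) - (\<Sum>t\<in>K. norm (B *v y t)) \<le> (\<Sum>t\<in>K. norm (B *v y t + d t))"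
  proof -
    have "(\<Sum>t\<in>K. norm (d t) - norm (B *v y t)) \<le> (\<Sum>t\<in>K. norm (B *v y t + d t))"
    proof (rule sum_mono)
      fix t show "norm (d t) - norm (B *v y t) \<le> norm (B *v y t + d t)"
        using norm_triangle_ineq4[of "B *v y t + d t" "B *v y t"] by simp
    qed
    thus ?thesis by (simp add: sum_subtractf)
  qed
  then show "(\<Sum>t<T. norm ((Abar - Abar) *v f (traj f Abar d t) + d t))
       \<le> (\<Sum>t<T. norm ((Abar - A) *v f (traj f Abar d t) + d t))"
    using L R key by linarith
qed

end
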